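(* Let $R=k[x_1,\ldots,x_m]$ be a polynomial ring over a field $k$ with graded maximal ideal $\mathfrak m=(x_1,\ldots,x_m)$, and let $I_1,I_2$ be non-zero proper monomial ideals of $R$ such that $\partial^*(I_1)\subseteq I_2$. Then $I_1\subseteq \mathfrak m I_2$, and there exists a map $\phi:\mathcal G(I_1)\to\mathcal G(I_2)$ such that for every non-empty subset $G'\subseteq \mathcal G(I_1)$, the monomial $\operatorname{lcm} G'$ belongs to the ideal $(\operatorname{lcm}\phi(G'))\mathfrak m$.
   Context: For a monomial ideal $L$, $\mathcal G(L)$ is its set of minimal monomial generators, and $\partial^*(L)$ is the ideal generated by all monomials $f/x_i$, where $f\in\mathcal G(L)$ and $x_i$ is a variable dividing $f$. For a set $G'$ of monomials, $\operatorname{lcm}G'$ is the least common multiple of its elements. *)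

theory Defs
  imports Main
begin

text \<open>Monomials of k[x_v : v in 'v] ('v a finite type of variables, m = CARD('v)) are
exponent vectors 'v => nat.
A monomial ideal of R is determined by (and identified with) the set of monomials it contains;
such a set is exactly a set closed under multiplication by monomials (upward closed).\<close>

type_synonym 'v monomial = "'v \<Rightarrow> nat"

definition mdvd :: "'v monomial \<Rightarrow> 'v monomial \<Rightarrow> bool" where
  "mdvd a b \<longleftrightarrow> (\<forall>i. a i \<le> b i)"

definition mmult :: "'v monomial \<Rightarrow> 'v monomial \<Rightarrow> 'v monomial" where
  "mmult a b = (\<lambda>i. a i + b i)"

definition one_mon :: "'v monomial" where
  "one_mon = (\<lambda>i. 0)"

definition var_mon :: "'v \<Rightarrow> 'v monomial" where
  "var_mon i = (\<lambda>j. if j = i then 1 else 0)"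

definition monomial_ideal :: "'v monomial set \<Rightarrow> bool" where
  "monomial_ideal I \<longleftrightarrow> (\<forall>a\<in>I. \<forall>b. mdvd a b \<longrightarrow> b \<in> I)"

definition gen_ideal :: "'v monomial set \<Rightarrow> 'v monomial set" where
  "gen_ideal S = {u. \<exists>s\<in>S. mdvd s u}"

definition mingens :: "'v monomial set \<Rightarrow> 'v monomial set" where
  "mingens L = {f\<in>L. \<forall>g\<in>L. mdvd g f \<longrightarrow> g = f}"

definition dstar :: "'v monomial set \<Rightarrow> 'v monomial set" where
  "dstar L = gen_ideal {g. \<exists>f\<in>mingens L. \<exists>i. mdvd (var_mon i) f \<and> mmult g (var_mon i) = f}"

definition max_times :: "'v monomial set \<Rightarrow> 'v monomial set" where
  "max_times L = gen_ideal {mmult g (var_mon i) | g i. g \<in> L}"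

definition mlcm :: "'v monomial set \<Rightarrow> 'v monomial" where
  "mlcm S = (\<lambda>i. Max ((\<lambda>f. f i) ` S))"

end

theory Submission
  imports Defs Complex_Main
begin

lemma exists_mingen:
  fixes L :: "('v::finite) monomial set"
  assumes "u \<in> L" shows "\<exists>g\<in>mingens L. mdvd g u"
proof -
  let ?S = "{g\<in>L. mdvd g u}"
  have "u \<in> ?S" using assms by (auto simp: mdvd_def)
  then obtain g where g: "g \<in> ?S" "\<forall>h. h\<in>?S \<longrightarrow> sum g UNIV \<le> sum h UNIV"
    using ex_has_least_nat[of "\<lambda>g. g\<in>?S" u "\<lambda>g. sum g UNIV"] by blast
  have "g \<in> mingens L"
    unfolding mingens_def
  proof (intro CollectI conjI ballI impI)
    show "g\<in>L" using g by simp
    fix h assume h: "h\<in>L" "mdvd h g"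
    then have "h \<in> ?S" using g by (auto simp: mdvd_def intro: le_trans)
    hence le: "sum g UNIV \<le> sum h UNIV" using g by auto
    show "h = g"
    proof (rule ccontr)
      assume "h \<noteq> g" then obtain i where "h i \<noteq> g i" by auto
      hence "h i < g i" using h(2) by (simp add: mdvd_def le_neq_trans)
      then have "sum h UNIV < sum g UNIV" using sum_strict_mono_ex1[of UNIV h g] h(2)
        by (auto simp: mdvd_def)
      with le show False by simp
    qed
  qed
  thus ?thesis using g by auto
qed

lemma nat_mono_subseq:
  fixes s :: "nat \<Rightarrow> nat"
  shows "\<exists>r::nat\<Rightarrow>nat. strict_mono r \<and> (\<forall>m n. m \<le> n \<longrightarrow> s (r m) \<le> s (r n))"
proof -
  obtain r :: "nat \<Rightarrow> nat" where r: "strict_mono r" "monoseq (\<lambda>n. s (r n))" using seq_monosub by blast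
  show ?thesis
  proof (cases "\<forall>m n. m \<le> n \<longrightarrow> s (r m) \<le> s (r n)")
    case True then show ?thesis using r by blast
  next
    case False
    hence dec: "\<forall>m n. m \<le> n \<longrightarrow> s (r n) \<le> s (r m)" using r(2) unfolding monoseq_def by blast
    obtain N where N: "\<forall>n. s (r N) \<le> s (r n)"
      using ex_has_least_nat[of "\<lambda>_. True" 0 "\<lambda>n. s (r n)"] by blast
    have c: "s (r n) = s (r N)" if "n \<ge> N" for n
      using N[rule_format, of n] dec[rule_format, OF that] by simp
    have "strict_mono (\<lambda>n. r (n + N))"
      by (rule strict_monoI) (simp add: strict_monoD[OF r(1)])
    moreover have "\<forall>m n. m \<le> n \<longrightarrow> s (r (m+N)) \<le> s (r (n+N))"
    proof (intro allI impI)
      fix m n :: nat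
      have "s (r (m+N)) = s (r N)" by (rule c) simp
      moreover have "s (r (n+N)) = s (r N)" by (rule c) simp
      ultimately show "s (r (m+N)) \<le> s (r (n+N))" by simp
    qed
    ultimately show ?thesis by blast
  qed
qed

lemma dickson:
  fixes f :: "nat \<Rightarrow> 'v \<Rightarrow> nat"
  assumes "finite D"
  shows "\<exists>r::nat\<Rightarrow>nat. strict_mono r \<and> (\<forall>k\<in>D. \<forall>m n. m \<le> n \<longrightarrow> f (r m) k \<le> f (r n) k)"
  using assms
proof (induction D rule: finite_induct)
  case empty
  have "strict_mono (id :: nat \<Rightarrow> nat)" by (simp add: strict_mono_def)
  thus ?case by blast
next
  case (insert x D)
  then obtain r :: "nat \<Rightarrow> nat" where r: "strict_mono r" "\<forall>k\<in>D. \<forall>m n. m \<le> n \<longrightarrow> f (r m) k \<le> f (r n) k"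
    by blast
  obtain r2 :: "nat \<Rightarrow> nat" where r2: "strict_mono r2" "\<forall>m n. m \<le> n \<longrightarrow> f (r (r2 m)) x \<le> f (r (r2 n)) x"
    using nat_mono_subseq[of "\<lambda>n. f (r n) x"] by blast
  have "strict_mono (r \<circ> r2)" using r(1) r2(1) by (rule strict_mono_o)
  moreover have "\<forall>k\<in>insert x D. \<forall>m n. m \<le> n \<longrightarrow> f ((r \<circ> r2) m) k \<le> f ((r \<circ> r2) n) k"
    using r(2) r2 strict_mono_less_eq[OF r2(1)] by auto
  ultimately show ?case by blast
qed

lemma finite_mingens:
  fixes L :: "('v::finite) monomial set"
  shows "finite (mingens L)"
proof (rule ccontr)
  assume "infinite (mingens L)"
  then obtain f :: "nat \<Rightarrow> 'v monomial" where f: "inj f" "range f \<subseteq> mingens L"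
    using infinite_countable_subset by blast
  obtain r :: "nat \<Rightarrow> nat" where r: "strict_mono r" "\<forall>k\<in>(UNIV::'v set). \<forall>m n. m \<le> n \<longrightarrow> f (r m) k \<le> f (r n) k"
    using dickson[of "UNIV::'v set" f] by auto
  have "mdvd (f (r 0)) (f (r 1))" using r(2) by (simp add: mdvd_def)
  moreover have "f (r 0) \<in> L" "f (r 1) \<in> mingens L" using f(2) by (auto simp: mingens_def)
  ultimately have "f (r 0) = f (r 1)" unfolding mingens_def by blast
  hence "r 0 = r 1" using f(1) by (simp add: inj_eq)
  moreover have "r 0 < r 1" using r(1) by (simp add: strict_mono_def)
  ultimately show False by simp
qed

lemma nonone_var:
  fixes g :: "'v monomial"
  assumes "g \<noteq> one_mon"
  shows "\<exists>i. g i > 0"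
  using assms by (auto simp: one_mon_def)

lemma divide_var:
  fixes I1 :: "('v::finite) monomial set"
  assumes "g \<in> mingens I1" "g i > 0" "dstar I1 \<subseteq> I2"
  shows "\<exists>h\<in>mingens I2. mdvd (mmult h (var_mon i)) g"
proof -
  define h where "h = (\<lambda>j. g j - (if j = i then 1 else 0))"
  have e: "mmult h (var_mon i) = g" using assms(2)
    by (auto simp: h_def mmult_def var_mon_def)
  have "mdvd (var_mon i) g" using assms(2) by (auto simp: mdvd_def var_mon_def)
  hence "h \<in> dstar I1" using assms(1) e unfolding dstar_def gen_ideal_def
    by (auto simp: mdvd_def)
  hence "h \<in> I2" using assms(3) by blast
  then obtain h' where h': "h' \<in> mingens I2" "mdvd h' h" using exists_mingen by blast
  have "mdvd (mmult h' (var_mon i)) g" using h'(2) e by (auto simp: mdvd_def mmult_def)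
  thus ?thesis using h' by blast
qed


lemma top_var:
  fixes \<nu> :: "('v::finite) \<Rightarrow> nat" and g :: "'v monomial"
  assumes "\<exists>i. g i > 0"
  shows "\<exists>i. g i > 0 \<and> (\<forall>j. g j > 0 \<longrightarrow> \<nu> j \<le> \<nu> i)"
proof -
  let ?S = "{j. g j > 0}"
  have fin: "finite (\<nu> ` ?S)" "\<nu> ` ?S \<noteq> {}" using assms by auto
  then have "Max (\<nu> ` ?S) \<in> \<nu> ` ?S" by (rule Max_in)
  then obtain i where i: "i \<in> ?S" "\<nu> i = Max (\<nu> ` ?S)" by auto
  have "\<forall>j. g j > 0 \<longrightarrow> \<nu> j \<le> \<nu> i" using i(2) fin(1) by (auto intro: Max_ge)
  thus ?thesis using i(1) by auto
qed

lemma mdvd_trans: "mdvd a b \<Longrightarrow> mdvd b c \<Longrightarrow> mdvd a c"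
  by (auto simp: mdvd_def intro: le_trans)

lemma mdvd_refl: "mdvd a a" by (simp add: mdvd_def)

theorem proposition4p4:
  fixes I1 I2 :: "('v::finite) monomial set"
  assumes "monomial_ideal I1" and "monomial_ideal I2"
    and "I1 \<noteq> {}" and "I2 \<noteq> {}"
    and "one_mon \<notin> I1" and "one_mon \<notin> I2"
    and "dstar I1 \<subseteq> I2"
  shows "I1 \<subseteq> max_times I2 \<and>
    (\<exists>\<phi>. (\<forall>f\<in>mingens I1. \<phi> f \<in> mingens I2) \<and>
         (\<forall>G'. G' \<subseteq> mingens I1 \<and> G' \<noteq> {} \<longrightarrow>
               mlcm G' \<in> max_times (gen_ideal {mlcm (\<phi> ` G')})))"
proof -
  have nonone: "\<exists>i. g i > 0" if "g \<in> I1" for g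
    using that assms(5) nonone_var by metis
  have part1: "I1 \<subseteq> max_times I2"
  proof
    fix u assume "u \<in> I1"
    then obtain g where g: "g \<in> mingens I1" "mdvd g u" using exists_mingen by blast
    then obtain i where "g i > 0" using nonone by (auto simp: mingens_def)
    then obtain h where h: "h \<in> mingens I2" "mdvd (mmult h (var_mon i)) g"
      using divide_var[OF g(1) _ assms(7)] by blast
    have "h \<in> I2" using h(1) by (simp add: mingens_def)
    moreover have "mdvd (mmult h (var_mon i)) u" using h(2) g(2) by (rule mdvd_trans)
    ultimately show "u \<in> max_times I2" unfolding max_times_def gen_ideal_def by blast
  qed
  obtain \<nu> :: "'v \<Rightarrow> nat" and n where "\<nu> ` UNIV = {i. i < n}" "inj_on \<nu> UNIV"
    using finite_imp_inj_to_nat_seg[of "UNIV :: 'v set"] by auto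
  hence inj: "inj \<nu>" by simp
  define idx where "idx f = (SOME i. f i > 0 \<and> (\<forall>j. f j > 0 \<longrightarrow> \<nu> j \<le> \<nu> i))" for f :: "'v monomial"
  have idx: "f (idx f) > 0 \<and> (\<forall>j. f j > 0 \<longrightarrow> \<nu> j \<le> \<nu> (idx f))" if "\<exists>i. f i > 0" for f
    unfolding idx_def using top_var[OF that, of \<nu>] by (rule someI_ex)
  define \<phi> where "\<phi> f = (SOME h. h \<in> mingens I2 \<and> mdvd (mmult h (var_mon (idx f))) f)" for f
  have phi: "\<phi> f \<in> mingens I2 \<and> mdvd (mmult (\<phi> f) (var_mon (idx f))) f" if "f \<in> mingens I1" for f
  proof -
    have "\<exists>i. f i > 0" using that nonone by (auto simp: mingens_def)
    hence "f (idx f) > 0" using idx by blast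
    then have "\<exists>h. h \<in> mingens I2 \<and> mdvd (mmult h (var_mon (idx f))) f"
      using divide_var[OF that _ assms(7)] by blast
    thus ?thesis unfolding \<phi>_def by (rule someI_ex)
  qed
  have phik: "\<phi> f k + (if k = idx f then 1 else 0) \<le> f k" if "f \<in> mingens I1" for f k
    using phi[OF that] by (auto simp: mdvd_def mmult_def var_mon_def split: if_splits)
  have part2: "mlcm G' \<in> max_times (gen_ideal {mlcm (\<phi> ` G')})"
    if G: "G' \<subseteq> mingens I1" "G' \<noteq> {}" for G'
  proof -
    have fin: "finite G'" using G(1) finite_mingens finite_subset by blast
    have ge: "f k \<le> mlcm G' k" if "f \<in> G'" for f k
      unfolding mlcm_def using fin that by (auto intro: Max_ge)
    obtain f0 where f0: "f0 \<in> G'" using G(2) by blast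
    have "f0 \<in> I1" using f0 G(1) by (auto simp: mingens_def)
    then obtain i where "f0 i > 0" using nonone by blast
    hence "mlcm G' i > 0" using ge[OF f0, of i] by simp
    then obtain j where j: "mlcm G' j > 0" "\<forall>k. mlcm G' k > 0 \<longrightarrow> \<nu> k \<le> \<nu> j"
      using top_var[of "mlcm G'" \<nu>] by blast
    have lt: "\<phi> f j < mlcm G' j" if f: "f \<in> G'" for f
    proof (cases "f j < mlcm G' j")
      case True
      then show ?thesis using phik[of f j] f G(1) by auto
    next
      case False
      hence fj: "f j = mlcm G' j" using ge[OF f, of j] by simp
      have fm: "f \<in> mingens I1" using f G(1) by blast
      have ex: "\<exists>i. f i > 0" using fm nonone by (auto simp: mingens_def)
      have "\<nu> j \<le> \<nu> (idx f)" using idx[OF ex] fj j(1) by auto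
      moreover have "mlcm G' (idx f) > 0" using idx[OF ex] ge[OF f, of "idx f"] by simp
      hence "\<nu> (idx f) \<le> \<nu> j" using j(2) by blast
      ultimately have "idx f = j" using inj by (simp add: inj_eq)
      then show ?thesis using phik[OF fm, of j] fj by auto
    qed
    have "mdvd (mmult (mlcm (\<phi> ` G')) (var_mon j)) (mlcm G')"
      unfolding mdvd_def
    proof
      fix k
      have fin2: "finite ((\<lambda>h. h k) ` \<phi> ` G')" "(\<lambda>h. h k) ` \<phi> ` G' \<noteq> {}"
        using fin G(2) by auto
      show "mmult (mlcm (\<phi> ` G')) (var_mon j) k \<le> mlcm G' k"
      proof (cases "k = j")
        case True
        have "Max ((\<lambda>h. h k) ` \<phi> ` G') < mlcm G' k"
          using Max_less_iff[OF fin2] lt True by auto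
        then show ?thesis using True by (simp add: mmult_def var_mon_def mlcm_def)
      next
        case False
        have "\<phi> f k \<le> mlcm G' k" if "f \<in> G'" for f
          using phik[of f k] ge[OF that, of k] that G(1) by fastforce
        hence "Max ((\<lambda>h. h k) ` \<phi> ` G') \<le> mlcm G' k"
          using Max_le_iff[OF fin2] by auto
        then show ?thesis using False by (simp add: mmult_def var_mon_def mlcm_def)
      qed
    qed
    moreover have "mlcm (\<phi> ` G') \<in> gen_ideal {mlcm (\<phi> ` G')}"
      by (auto simp: gen_ideal_def mdvd_refl)
    ultimately show ?thesis unfolding max_times_def gen_ideal_def by blast
  qed
  show ?thesis using part1 part2 phi by blast
qed

end
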